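(* Let $s\ge0$. Then for every $t\in\mathbb{R}$ the trilinear operator $B_3$ defined in the context maps $(\dot H^s)^3$ into $\dot H^{s+2}$ and satisfies $$\|B_3(u,v,w)\|_{\dot H^{s+2}}\le c_3(s)\|u\|_{\dot H^s}\|v\|_{\dot H^s}\|w\|_{\dot H^s},$$ with a constant $c_3(s)$ depending only on $s$.
   Context: Write $\mathbb{Z}_0=\mathbb{Z}\setminus\{0\}$. For $s\in\mathbb{R}$, $\dot H^s$ denotes the Hilbert space of complex sequences $v=(v_k)_{k\in\mathbb{Z}_0}$ with $\|v\|_{\dot H^s}^2=\sum_{k\in\mathbb{Z}_0}|k|^{2s}|v_k|^2<\infty$. For $t\in\mathbb{R}$, $$B_3(u,v,w)_k=\sum^{\mathrm{nonres}}_{k_1+k_2+k_3=k}\frac{e^{3i(k_1+k_2)(k_2+k_3)(k_3+k_1)t}}{k_1(k_1+k_2)(k_2+k_3)(k_3+k_1)}u_{k_1}v_{k_2}w_{k_3},\qquad k\in\mathbb{Z}_0,$$ where the sum runs over $k_1,k_2,k_3\in\mathbb{Z}_0$ with $k_1+k_2+k_3=k$ and $(k_1+k_2)(k_2+k_3)(k_3+k_1)\ne0$. *)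

theory Defs
  imports "HOL-Analysis.Analysis"
begin

text \<open>Sequences indexed by the nonzero integers are modelled as functions
  int \<Rightarrow> complex; the value at index 0 is irrelevant (never used).\<close>

definition Z0 :: "int set" where
  "Z0 = {k. k \<noteq> 0}"

definition in_Hdot :: "real \<Rightarrow> (int \<Rightarrow> complex) \<Rightarrow> bool" where
  "in_Hdot s v \<longleftrightarrow> ((\<lambda>k. abs (real_of_int k) powr (2 * s) * (cmod (v k))^2) summable_on Z0)"

definition Hdot_norm :: "real \<Rightarrow> (int \<Rightarrow> complex) \<Rightarrow> real" where
  "Hdot_norm s v = sqrt (\<Sum>\<^sub>\<infinity>k\<in>Z0. abs (real_of_int k) powr (2 * s) * (cmod (v k))^2)"

definition NR :: "int \<Rightarrow> (int \<times> int \<times> int) set" where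
  "NR k = {(k1,k2,k3). k1 \<noteq> 0 \<and> k2 \<noteq> 0 \<and> k3 \<noteq> 0 \<and> k1 + k2 + k3 = k \<and>
                      (k1+k2)*(k2+k3)*(k3+k1) \<noteq> 0}"

definition B3_term :: "real \<Rightarrow> (int \<Rightarrow> complex) \<Rightarrow> (int \<Rightarrow> complex) \<Rightarrow> (int \<Rightarrow> complex)
    \<Rightarrow> int \<times> int \<times> int \<Rightarrow> complex" where
  "B3_term t u v w = (\<lambda>(k1,k2,k3).
     cis (3 * real_of_int ((k1+k2)*(k2+k3)*(k3+k1)) * t)
     / of_int (k1*(k1+k2)*(k2+k3)*(k3+k1)) * u k1 * v k2 * w k3)"

definition B3 :: "real \<Rightarrow> (int \<Rightarrow> complex) \<Rightarrow> (int \<Rightarrow> complex) \<Rightarrow> (int \<Rightarrow> complex)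
    \<Rightarrow> int \<Rightarrow> complex" where
  "B3 t u v w k = (\<Sum>\<^sub>\<infinity>x\<in>NR k. B3_term t u v w x)"

end

theory Submission
  imports Defs
begin

lemma fa_sum:
  fixes f :: "'a \<Rightarrow> real"
  assumes "\<And>x. x\<in>A \<Longrightarrow> 0 \<le> f x" "\<And>F. finite F \<Longrightarrow> F \<subseteq> A \<Longrightarrow> sum f F \<le> B"
  shows "f summable_on A" "infsum f A \<le> B"
proof -
  show s: "f summable_on A"
    by (rule nonneg_bdd_above_summable_on) (use assms in \<open>auto intro!: bdd_aboveI2\<close>)
  show "infsum f A \<le> B" by (rule infsum_le_finite_sums[OF s]) (use assms in auto)
qed

lemma sq5: fixes a b c d e :: real
  shows "(a+b+c+d+e)^2 \<le> 5*(a^2+b^2+c^2+d^2+e^2)"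
proof -
  have e: "5*(a^2+b^2+c^2+d^2+e^2) - (a+b+c+d+e)^2 = (a-b)^2+(a-c)^2+(a-d)^2+(a-e)^2+(b-c)^2+(b-d)^2+(b-e)^2+(c-d)^2+(c-e)^2+(d-e)^2"
    by algebra
  have "0 \<le> (a-b)^2+(a-c)^2+(a-d)^2+(a-e)^2+(b-c)^2+(b-d)^2+(b-e)^2+(c-d)^2+(c-e)^2+(d-e)^2" by simp
  then show ?thesis using e by linarith
qed

lemma inv_sq_nat: fixes n :: nat assumes "n \<ge> 1" shows "(\<Sum>i=1..n. 1/(real i)^2) \<le> 2 - 1/real n"
  using assms
proof (induction n rule: dec_induct)
  case base then show ?case by simp
next
  case (step n)
  have "1/(real (Suc n))^2 \<le> 1/real n - 1/real (Suc n)"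
  proof -
    have "1/real n - 1/real (Suc n) = 1/(real n * real (Suc n))" using step(1) by (simp add: field_simps)
    moreover have "real n * real (Suc n) \<le> (real (Suc n))^2" by (simp add: power2_eq_square)
    moreover have "0 < real n * real (Suc n)" using step(1) by simp
    ultimately have "1/(real (Suc n))^2 \<le> 1/(real n * real (Suc n))"
      by (intro divide_left_mono) auto
    with \<open>1/real n - 1/real (Suc n) = 1/(real n * real (Suc n))\<close> show ?thesis by simp
  qed
  with step show ?case by simp
qed

lemma inv_sq_pos: fixes F :: "int set" assumes "finite F" "F \<subseteq> {0<..}"
  shows "(\<Sum>n\<in>F. 1/(real_of_int n)^2) \<le> 2"
proof -
  define N where "N = nat (\<Sum>n\<in>F. \<bar>n\<bar>) + 1"
  have N1: "N \<ge> 1" by (simp add: N_def)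
  have sub: "F \<subseteq> int ` {1..N}"
  proof
    fix n assume n: "n \<in> F"
    have "\<bar>n\<bar> \<le> (\<Sum>n\<in>F. \<bar>n\<bar>)" by (rule member_le_sum) (use assms n in auto)
    then have "n \<le> int N" using n assms by (auto simp: N_def)
    moreover have "n > 0" using n assms by auto
    ultimately show "n \<in> int ` {1..N}"
      by (intro image_eqI[of _ _ "nat n"]) auto
  qed
  have "(\<Sum>n\<in>F. 1/(real_of_int n)^2) \<le> (\<Sum>n\<in>int ` {1..N}. 1/(real_of_int n)^2)"
    by (rule sum_mono2[OF _ sub]) auto
  also have "\<dots> = (\<Sum>i=1..N. 1/(real i)^2)"
    by (subst sum.reindex) (auto simp: inj_on_def)
  also have "\<dots> \<le> 2 - 1/real N" by (rule inv_sq_nat[OF N1])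
  also have "\<dots> \<le> 2" by simp
  finally show ?thesis .
qed

lemma inv_sq: fixes F :: "int set" assumes "finite F" "F \<subseteq> Z0"
  shows "(\<Sum>n\<in>F. 1/(real_of_int n)^2) \<le> 4"
proof -
  let ?h = "\<lambda>n::int. 1/(real_of_int n)^2"
  have F: "F = (F \<inter> {0<..}) \<union> (F \<inter> {..<0})" using assms by (auto simp: Z0_def)
  have "sum ?h F = sum ?h (F \<inter> {0<..}) + sum ?h (F \<inter> {..<0})"
    by (subst F, rule sum.union_disjoint) (use assms in auto)
  also have "sum ?h (F \<inter> {..<0}) = sum ?h (uminus ` (F \<inter> {..<0}))"
    by (subst sum.reindex) (auto simp: inj_on_def)
  also have "sum ?h (F \<inter> {0<..}) \<le> 2" by (rule inv_sq_pos) (use assms in auto)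
  also have "sum ?h (uminus ` (F \<inter> {..<0})) \<le> 2" by (rule inv_sq_pos) (use assms in auto)
  finally show ?thesis by simp
qed

lemma pair_sum: fixes H :: "(int \<times> int) set" assumes "finite H" "H \<subseteq> Z0 \<times> Z0"
  shows "(\<Sum>(x,y)\<in>H. 1/(real_of_int x)^2 * (1/(real_of_int y)^2)) \<le> 16"
proof -
  let ?h = "\<lambda>n::int. 1/(real_of_int n)^2"
  have "(\<Sum>(x,y)\<in>H. ?h x * ?h y) \<le> (\<Sum>(x,y)\<in>fst ` H \<times> snd ` H. ?h x * ?h y)"
    by (rule sum_mono2) (use assms in \<open>auto simp: case_prod_beta intro: rev_image_eqI\<close>)
  also have "\<dots> = sum ?h (fst ` H) * sum ?h (snd ` H)"
    by (simp add: sum_product sum.cartesian_product)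
  also have "\<dots> \<le> 4 * 4"
    by (intro mult_mono inv_sq) (use assms in \<open>auto intro: sum_nonneg\<close>)
  finally show ?thesis by simp
qed

lemma key_ineq: fixes x1 x2 x3 :: real
  shows "(x1+x2+x3)^2 \<le> 16*(\<bar>x1*(x2+x3)\<bar> + \<bar>x1*(x1+x2)\<bar> + \<bar>x1*(x3+x1)\<bar>
           + \<bar>(x2+x3)*(x1+x2)\<bar> + \<bar>(x2+x3)*(x3+x1)\<bar>)"
proof -
  define K where "K = \<bar>x1+x2+x3\<bar>"
  define a where "a = \<bar>x1\<bar>"
  define b where "b = \<bar>x2+x3\<bar>"
  define P where "P = \<bar>x1+x2\<bar> + \<bar>x3+x1\<bar>"
  have sq: "(x1+x2+x3)^2 = K*K" by (simp add: K_def power2_eq_square abs_mult_self_eq)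
  have R: "\<bar>x1*(x2+x3)\<bar> + \<bar>x1*(x1+x2)\<bar> + \<bar>x1*(x3+x1)\<bar>
           + \<bar>(x2+x3)*(x1+x2)\<bar> + \<bar>(x2+x3)*(x3+x1)\<bar> = a*b + a*P + b*P"
    by (simp only: a_def b_def P_def abs_mult) (simp add: algebra_simps)
  have a0: "a \<ge> 0" "b \<ge> 0" "P \<ge> 0" "K \<ge> 0" by (auto simp: a_def b_def P_def K_def)
  have Pge: "P \<ge> \<bar>2*x1+x2+x3\<bar>" unfolding P_def by (rule order_trans[OF _ abs_triangle_ineq]) simp
  have "K \<le> a + b" unfolding K_def a_def b_def by (metis abs_triangle_ineq add.assoc)
  have t2: "\<bar>2*x1+x2+x3\<bar> \<ge> K - a" unfolding K_def a_def by arith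
  have t3: "\<bar>2*x1+x2+x3\<bar> \<ge> 2*K - b" unfolding K_def b_def by (auto simp: abs_if)
  have t4: "b \<ge> K - a" "a \<ge> K - b" unfolding K_def a_def b_def by arith+
  consider "4*a \<ge> K" "4*b \<ge> K" | "4*a < K" | "4*b < K" by linarith
  then have "K*K \<le> 16*(a*b + a*P + b*P)"
  proof cases
    case 1
    then have "K*K \<le> (4*a)*(4*b)" by (intro mult_mono) (use a0 in auto)
    moreover have "a*P \<ge> 0" "b*P \<ge> 0" using a0 by auto
    ultimately show ?thesis by (simp add: algebra_simps)
  next
    case 2
    then have "3*K/4 \<le> b" "3*K/4 \<le> P" using t4 t2 Pge by linarith+
    then have "(3*K/4)*(3*K/4) \<le> b*P" by (intro mult_mono) (use a0 in auto)
    then have "9*(K*K) \<le> 16*(b*P)" by (simp add: algebra_simps)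
    moreover have "a*P \<ge> 0" "a*b \<ge> 0" "K*K \<ge> 0" using a0 by auto
    ultimately show ?thesis by (smt (verit))
  next
    case 3
    then have "3*K/4 \<le> a" "K \<le> P" using t4 t3 Pge by linarith+
    then have "(3*K/4)*K \<le> a*P" by (intro mult_mono) (use a0 in auto)
    then have "3*(K*K) \<le> 4*(a*P)" by (simp add: algebra_simps)
    moreover have "b*P \<ge> 0" "a*b \<ge> 0" "K*K \<ge> 0" using a0 by auto
    ultimately show ?thesis by (smt (verit))
  qed
  then show ?thesis using sq R by simp
qed

lemma mbound_real: fixes x1 x2 x3 :: real
  assumes "x1 \<noteq> 0" "x1+x2 \<noteq> 0" "x2+x3 \<noteq> 0" "x3+x1 \<noteq> 0"
  shows "(x1+x2+x3)^2 / \<bar>x1*(x1+x2)*(x2+x3)*(x3+x1)\<bar> \<le>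
     16*(1/\<bar>(x1+x2)*(x3+x1)\<bar> + 1/\<bar>(x2+x3)*(x3+x1)\<bar> + 1/\<bar>(x2+x3)*(x1+x2)\<bar>
         + 1/\<bar>x1*(x3+x1)\<bar> + 1/\<bar>x1*(x1+x2)\<bar>)"
proof -
  let ?D = "\<bar>x1*(x1+x2)*(x2+x3)*(x3+x1)\<bar>"
  let ?S = "\<bar>x1*(x2+x3)\<bar> + \<bar>x1*(x1+x2)\<bar> + \<bar>x1*(x3+x1)\<bar>
           + \<bar>(x2+x3)*(x1+x2)\<bar> + \<bar>(x2+x3)*(x3+x1)\<bar>"
  have D0: "?D > 0" using assms by simp
  have "(x1+x2+x3)^2 / ?D \<le> (16 * ?S) / ?D"
    by (rule divide_right_mono[OF key_ineq]) simp
  also have "(16 * ?S) / ?D = 16*(1/\<bar>(x1+x2)*(x3+x1)\<bar> + 1/\<bar>(x2+x3)*(x3+x1)\<bar> + 1/\<bar>(x2+x3)*(x1+x2)\<bar>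
         + 1/\<bar>x1*(x3+x1)\<bar> + 1/\<bar>x1*(x1+x2)\<bar>)"
    using assms by (simp only: abs_mult) (simp add: field_simps)
  finally show ?thesis .
qed

definition mm :: "int \<times> int \<times> int \<Rightarrow> real" where
  "mm x = (case x of (k1,k2,k3) \<Rightarrow>
      (real_of_int (k1+k2+k3))^2 / \<bar>real_of_int (k1*(k1+k2)*(k2+k3)*(k3+k1))\<bar>)"

lemma mm_nonneg: "mm x \<ge> 0"
  by (auto simp: mm_def split: prod.splits)

definition "wsq f g = (\<lambda>x::int\<times>int\<times>int. 1/(real_of_int (f x))^2 * (1/(real_of_int (g x))^2))"

definition "af = (\<lambda>(a::int,b::int,c::int). a)"
definition "pf = (\<lambda>(a::int,b::int,c::int). a+b)"
definition "qf = (\<lambda>(a::int,b::int,c::int). b+c)"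
definition "rf = (\<lambda>(a::int,b::int,c::int). c+a)"

lemma mm_sq_bound:
  assumes "x \<in> NR k"
  shows "(mm x)^2 \<le> 1280 * (wsq pf rf x + wsq qf rf x + wsq qf pf x + wsq af rf x + wsq af pf x)"
proof -
  obtain k1 k2 k3 where x: "x = (k1,k2,k3)" by (cases x) auto
  define x1 where "x1 = real_of_int k1"
  define x2 where "x2 = real_of_int k2"
  define x3 where "x3 = real_of_int k3"
  have nz: "x1 \<noteq> 0" "x1+x2 \<noteq> 0" "x2+x3 \<noteq> 0" "x3+x1 \<noteq> 0"
    using assms unfolding x NR_def x1_def x2_def x3_def by auto
  have m: "mm x = (x1+x2+x3)^2 / \<bar>x1*(x1+x2)*(x2+x3)*(x3+x1)\<bar>"
    by (simp add: mm_def x x1_def x2_def x3_def)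
  define A where "A = 1/\<bar>(x1+x2)*(x3+x1)\<bar>"
  define B where "B = 1/\<bar>(x2+x3)*(x3+x1)\<bar>"
  define C where "C = 1/\<bar>(x2+x3)*(x1+x2)\<bar>"
  define E where "E = 1/\<bar>x1*(x3+x1)\<bar>"
  define G where "G = 1/\<bar>x1*(x1+x2)\<bar>"
  have "mm x \<le> 16*(A+B+C+E+G)" unfolding m A_def B_def C_def E_def G_def
    by (rule mbound_real[OF nz])
  then have "(mm x)^2 \<le> (16*(A+B+C+E+G))^2" by (intro power_mono mm_nonneg)
  also have "\<dots> = 256 * (A+B+C+E+G)^2" by (simp only: power_mult_distrib) simp
  also have "\<dots> \<le> 256 * (5*(A^2+B^2+C^2+E^2+G^2))" by (intro mult_left_mono sq5) auto
  also have "A^2+B^2+C^2+E^2+G^2 = wsq pf rf x + wsq qf rf x + wsq qf pf x + wsq af rf x + wsq af pf x"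
    by (simp add: A_def B_def C_def E_def G_def wsq_def af_def pf_def qf_def rf_def x x1_def x2_def x3_def
        power_mult_distrib abs_mult power_divide)
  finally show ?thesis by simp
qed

lemma wsq_sum:
  assumes "finite H" "inj_on (\<lambda>x. (f x, g x)) H" "\<And>x. x\<in>H \<Longrightarrow> f x \<noteq> 0 \<and> g x \<noteq> 0"
  shows "sum (wsq f g) H \<le> 16"
proof -
  have "sum (wsq f g) H = (\<Sum>(a,b)\<in>(\<lambda>x. (f x, g x)) ` H. 1/(real_of_int a)^2 * (1/(real_of_int b)^2))"
    by (subst sum.reindex[OF assms(2)]) (simp add: wsq_def o_def)
  also have "\<dots> \<le> 16" by (rule pair_sum) (use assms in \<open>auto simp: Z0_def\<close>)
  finally show ?thesis .
qed

lemma NR_nz: "x \<in> NR k \<Longrightarrow> af x \<noteq> 0 \<and> pf x \<noteq> 0 \<and> qf x \<noteq> 0 \<and> rf x \<noteq> 0"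
  by (auto simp: NR_def af_def pf_def qf_def rf_def)

lemma inj_help: assumes "H \<subseteq> NR k"
  "\<And>a b c a' b' c'. a+b+c = a'+b'+c' \<Longrightarrow> \<phi> (a,b,c) = \<phi> (a',b',c') \<Longrightarrow> (a,b,c) = (a',b',c')"
  shows "inj_on \<phi> H"
proof (rule inj_onI)
  fix x y assume xy: "x \<in> H" "y \<in> H" "\<phi> x = \<phi> y"
  obtain a b c where x: "x = (a,b,c)" by (cases x) auto
  obtain a' b' c' where y: "y = (a',b',c')" by (cases y) auto
  have "a+b+c = a'+b'+c'" using xy assms(1) unfolding x y by (auto simp: NR_def subset_iff)
  then show "x = y" using assms(2) xy unfolding x y by blast
qed

lemma M_bound: assumes "finite H" "H \<subseteq> NR k"
  shows "(\<Sum>x\<in>H. (mm x)^2) \<le> 102400"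
proof -
  have hs: "\<And>a b c a' b' c'. (a,b,c) \<in> H \<Longrightarrow> (a',b',c') \<in> H \<Longrightarrow> a+b+c = a'+b'+c'"
    using assms(2) by (auto simp: NR_def subset_iff)
  have inj: "inj_on (\<lambda>x. (pf x, rf x)) H" "inj_on (\<lambda>x. (qf x, rf x)) H" "inj_on (\<lambda>x. (qf x, pf x)) H"
     "inj_on (\<lambda>x. (af x, rf x)) H" "inj_on (\<lambda>x. (af x, pf x)) H"
    by (rule inj_help[OF assms(2)]; simp add: af_def pf_def qf_def rf_def; arith)+
  have nz: "\<And>x. x \<in> H \<Longrightarrow> af x \<noteq> 0 \<and> pf x \<noteq> 0 \<and> qf x \<noteq> 0 \<and> rf x \<noteq> 0"
    using assms(2) NR_nz by blast
  have "(\<Sum>x\<in>H. (mm x)^2) \<le> (\<Sum>x\<in>H. 1280 * (wsq pf rf x + wsq qf rf x + wsq qf pf x + wsq af rf x + wsq af pf x))"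
    by (rule sum_mono, rule mm_sq_bound) (use assms in auto)
  also have "\<dots> = 1280 * (sum (wsq pf rf) H + sum (wsq qf rf) H + sum (wsq qf pf) H + sum (wsq af rf) H + sum (wsq af pf) H)"
    by (simp add: sum_distrib_left sum.distrib)
  also have "\<dots> \<le> 1280 * (16+16+16+16+16)"
    by (intro mult_left_mono add_mono wsq_sum[OF assms(1)] inj) (use nz in auto)
  finally show ?thesis by simp
qed

lemma powr_sq: fixes x s :: real assumes "x \<ge> 0" shows "(x powr s)^2 = x powr (2 * s)"
proof -
  have "(x powr s)^2 = x powr s * x powr s" by (rule power2_eq_square)
  also have "\<dots> = x powr (s + s)" by (rule powr_add[symmetric])
  also have "s + s = 2 * s" by simp
  finally show ?thesis .
qed

definition fs :: "real \<Rightarrow> (int \<Rightarrow> complex) \<Rightarrow> int \<Rightarrow> real" where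
  "fs s u j = abs (real_of_int j) powr (2 * s) * (cmod (u j))^2"

definition ha :: "real \<Rightarrow> (int \<Rightarrow> complex) \<Rightarrow> int \<Rightarrow> real" where
  "ha s u j = abs (real_of_int j) powr s * cmod (u j)"

definition gg :: "real \<Rightarrow> (int \<Rightarrow> complex) \<Rightarrow> (int \<Rightarrow> complex) \<Rightarrow> (int \<Rightarrow> complex) \<Rightarrow> int\<times>int\<times>int \<Rightarrow> real" where
  "gg s u v w x = (case x of (k1,k2,k3) \<Rightarrow> fs s u k1 * fs s v k2 * fs s w k3)"

lemma fs_nonneg: "fs s u j \<ge> 0" by (simp add: fs_def)
lemma ha_nonneg: "ha s u j \<ge> 0" by (simp add: ha_def)
lemma ha_sq: "(ha s u j)^2 = fs s u j"
  by (simp add: ha_def fs_def power_mult_distrib powr_sq)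
lemma gg_nonneg: "gg s u v w x \<ge> 0" by (auto simp: gg_def fs_nonneg split: prod.splits)

abbreviation "Z3 \<equiv> Z0 \<times> Z0 \<times> Z0"

lemma NR_Z3: "NR k \<subseteq> Z3" by (auto simp: NR_def Z0_def)

lemma fs_fin: assumes "in_Hdot s u" "finite F" "F \<subseteq> Z0"
  shows "sum (fs s u) F \<le> infsum (fs s u) Z0"
  by (rule finite_sum_le_infsum) (use assms in \<open>auto simp: in_Hdot_def fs_def[abs_def]\<close>)

lemma gg_P:
  assumes "in_Hdot s u" "in_Hdot s v" "in_Hdot s w" "A \<subseteq> Z3"
  shows "gg s u v w summable_on A"
        "infsum (gg s u v w) A \<le> infsum (fs s u) Z0 * infsum (fs s v) Z0 * infsum (fs s w) Z0"
proof -
  have fin: "sum (gg s u v w) H \<le> infsum (fs s u) Z0 * infsum (fs s v) Z0 * infsum (fs s w) Z0"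
    if H: "finite H" "H \<subseteq> A" for H
  proof -
    define S1 where "S1 = fst ` H"
    define S2 where "S2 = fst ` snd ` H"
    define S3 where "S3 = snd ` snd ` H"
    have sub: "H \<subseteq> S1 \<times> S2 \<times> S3" unfolding S1_def S2_def S3_def by force
    have fin3: "finite S1" "finite S2" "finite S3" using H unfolding S1_def S2_def S3_def by auto
    have subZ: "S1 \<subseteq> Z0" "S2 \<subseteq> Z0" "S3 \<subseteq> Z0" using H assms(4) unfolding S1_def S2_def S3_def by auto
    have "sum (gg s u v w) H \<le> sum (gg s u v w) (S1 \<times> S2 \<times> S3)"
      by (rule sum_mono2[OF _ sub]) (use fin3 gg_nonneg in auto)
    also have "\<dots> = (\<Sum>a\<in>S1. \<Sum>b\<in>S2. \<Sum>c\<in>S3. fs s u a * (fs s v b * fs s w c))"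
      by (simp add: gg_def sum.cartesian_product[symmetric] mult.assoc)
    also have "\<dots> = sum (fs s u) S1 * (sum (fs s v) S2 * sum (fs s w) S3)"
      unfolding sum_product by (simp add: sum_distrib_left)
    also have "\<dots> = sum (fs s u) S1 * sum (fs s v) S2 * sum (fs s w) S3" by (simp add: mult.assoc)
    also have "\<dots> \<le> infsum (fs s u) Z0 * infsum (fs s v) Z0 * infsum (fs s w) Z0"
    proof -
      have u: "sum (fs s u) S1 \<le> infsum (fs s u) Z0" by (rule fs_fin[OF assms(1) fin3(1) subZ(1)])
      have v: "sum (fs s v) S2 \<le> infsum (fs s v) Z0" by (rule fs_fin[OF assms(2) fin3(2) subZ(2)])
      have w: "sum (fs s w) S3 \<le> infsum (fs s w) Z0" by (rule fs_fin[OF assms(3) fin3(3) subZ(3)])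
      have n: "0 \<le> sum (fs s u) S1" "0 \<le> sum (fs s v) S2" "0 \<le> sum (fs s w) S3"
        by (simp_all add: sum_nonneg fs_nonneg)
      show ?thesis
        by (rule mult_mono[OF mult_mono[OF u v] w]) (use n u v in \<open>auto intro: order_trans\<close>)
    qed
    finally show ?thesis .
  qed
  show "gg s u v w summable_on A" by (rule fa_sum(1)) (use fin gg_nonneg in auto)
  show "infsum (gg s u v w) A \<le> infsum (fs s u) Z0 * infsum (fs s v) Z0 * infsum (fs s w) Z0"
    by (rule fa_sum(2)) (use fin gg_nonneg in auto)
qed

lemma NR_disj: "x \<in> NR k \<Longrightarrow> x \<in> NR k' \<Longrightarrow> k = k'"
  by (auto simp: NR_def)

lemma union_sum:
  assumes "in_Hdot s u" "in_Hdot s v" "in_Hdot s w" "finite F"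
  shows "(\<Sum>k\<in>F. infsum (gg s u v w) (NR k)) = infsum (gg s u v w) (\<Union>k\<in>F. NR k)"
  using assms(4)
proof (induction F rule: finite_induct)
  case empty then show ?case by simp
next
  case (insert k F)
  have Z: "(\<Union>k\<in>F. NR k) \<subseteq> Z3" using NR_Z3 by (simp add: UN_subset_iff)
  have d: "NR k \<inter> (\<Union>k\<in>F. NR k) = {}" using insert(2) by (auto dest: NR_disj)
  have "infsum (gg s u v w) (\<Union>k\<in>insert k F. NR k) = infsum (gg s u v w) (NR k \<union> (\<Union>k\<in>F. NR k))" by simp
  also have "\<dots> = infsum (gg s u v w) (NR k) + infsum (gg s u v w) (\<Union>k\<in>F. NR k)"
    using infsum_Un_disjoint[OF gg_P(1)[OF assms(1-3) NR_Z3] gg_P(1)[OF assms(1-3) Z] d] .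
  finally have e: "infsum (gg s u v w) (\<Union>k\<in>insert k F. NR k) = infsum (gg s u v w) (NR k) + infsum (gg s u v w) (\<Union>k\<in>F. NR k)" .
  have "(\<Sum>k\<in>insert k F. infsum (gg s u v w) (NR k)) = infsum (gg s u v w) (NR k) + (\<Sum>k\<in>F. infsum (gg s u v w) (NR k))"
    by (rule sum.insert[OF insert(1,2)])
  then show ?case using e insert(3) by linarith
qed

definition PP :: "real \<Rightarrow> (int \<Rightarrow> complex) \<Rightarrow> (int \<Rightarrow> complex) \<Rightarrow> (int \<Rightarrow> complex) \<Rightarrow> int\<times>int\<times>int \<Rightarrow> real" where
  "PP s u v w x = (case x of (k1,k2,k3) \<Rightarrow> ha s u k1 * ha s v k2 * ha s w k3)"

lemma PP_nonneg: "PP s u v w x \<ge> 0" by (auto simp: PP_def ha_nonneg split: prod.splits)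
lemma PP_sq: "(PP s u v w x)^2 = gg s u v w x"
  by (auto simp: PP_def gg_def power_mult_distrib ha_sq split: prod.splits)

lemma int_bound: fixes k1 k2 k3 :: int assumes "k1 \<noteq> 0" "k2 \<noteq> 0" "k3 \<noteq> 0"
  shows "\<bar>real_of_int (k1+k2+k3)\<bar> \<le> 3 * \<bar>real_of_int k1\<bar> * \<bar>real_of_int k2\<bar> * \<bar>real_of_int k3\<bar>"
proof -
  define a where "a = \<bar>real_of_int k1\<bar>"
  define b where "b = \<bar>real_of_int k2\<bar>"
  define c where "c = \<bar>real_of_int k3\<bar>"
  have ge: "a \<ge> 1" "b \<ge> 1" "c \<ge> 1" using assms by (auto simp: a_def b_def c_def)
  have "1*1 \<le> b*c" "1*1 \<le> a*c" "1*1 \<le> a*b" using ge by (intro mult_mono; simp)+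
  then have "a*1 \<le> a*(b*c)" "b*1 \<le> b*(a*c)" "c*1 \<le> c*(a*b)"
    using ge by (intro mult_left_mono; simp)+
  moreover have "\<bar>real_of_int (k1+k2+k3)\<bar> \<le> a + b + c" unfolding a_def b_def c_def by simp
  moreover have "3*a*b*c = a*(b*c) + b*(a*c) + c*(a*b)" by (simp add: algebra_simps)
  ultimately have "\<bar>real_of_int (k1+k2+k3)\<bar> \<le> 3*a*b*c" by linarith
  then show ?thesis by (simp add: a_def b_def c_def)
qed

lemma pointwise: assumes "s \<ge> 0" "x \<in> NR k"
  shows "\<bar>real_of_int k\<bar> powr (s+2) * cmod (B3_term t u v w x) \<le> 3 powr s * (mm x * PP s u v w x)"
proof -
  obtain k1 k2 k3 where x: "x = (k1,k2,k3)" by (cases x) auto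
  have nz: "k1 \<noteq> 0" "k2 \<noteq> 0" "k3 \<noteq> 0" and kk: "k = k1+k2+k3"
    and D: "(k1+k2)*(k2+k3)*(k3+k1) \<noteq> 0" using assms(2) by (auto simp: x NR_def)
  define U where "U = cmod (u k1) * cmod (v k2) * cmod (w k3)"
  have U0: "U \<ge> 0" by (simp add: U_def)
  define K where "K = \<bar>real_of_int k\<bar>"
  have K0: "K \<ge> 0" by (simp add: K_def)
  have tm: "cmod (B3_term t u v w x) = U / \<bar>real_of_int (k1*(k1+k2)*(k2+k3)*(k3+k1))\<bar>"
    by (simp add: B3_term_def x U_def norm_mult norm_divide norm_of_int del: of_int_mult)
  have mmx: "mm x = K^2 / \<bar>real_of_int (k1*(k1+k2)*(k2+k3)*(k3+k1))\<bar>"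
    by (simp add: mm_def x K_def kk del: of_int_mult)
  have Kp: "K powr (s+2) = K powr s * K^2"
    using K0 by (simp add: powr_add)
  have lhs: "\<bar>real_of_int k\<bar> powr (s+2) * cmod (B3_term t u v w x) = K powr s * (mm x * U)"
    unfolding K_def[symmetric] Kp tm mmx by simp
  have pp: "PP s u v w x = (\<bar>real_of_int k1\<bar> powr s * \<bar>real_of_int k2\<bar> powr s * \<bar>real_of_int k3\<bar> powr s) * U"
    by (simp add: PP_def ha_def x U_def)
  have "K powr s \<le> (3 * \<bar>real_of_int k1\<bar> * \<bar>real_of_int k2\<bar> * \<bar>real_of_int k3\<bar>) powr s"
    unfolding K_def kk by (rule powr_mono2[OF assms(1)]) (use int_bound[OF nz] in auto)
  also have "\<dots> = 3 powr s * (\<bar>real_of_int k1\<bar> powr s * \<bar>real_of_int k2\<bar> powr s * \<bar>real_of_int k3\<bar> powr s)"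
    by (simp add: powr_mult)
  finally have "K powr s * (mm x * U) \<le> (3 powr s * (\<bar>real_of_int k1\<bar> powr s * \<bar>real_of_int k2\<bar> powr s * \<bar>real_of_int k3\<bar> powr s)) * (mm x * U)"
    by (rule mult_right_mono) (simp add: U0 mm_nonneg)
  then show ?thesis unfolding lhs pp by (simp add: algebra_simps)
qed

lemma per_k:
  assumes s0: "s \<ge> 0" and hu: "in_Hdot s u" and hv: "in_Hdot s v" and hw: "in_Hdot s w" and k0: "k \<noteq> 0"
  shows "(B3_term t u v w) summable_on NR k"
        "\<bar>real_of_int k\<bar> powr (s+2) * cmod (B3 t u v w k) \<le> 3 powr s * 320 * sqrt (infsum (gg s u v w) (NR k))"
proof -
  define G where "G = infsum (gg s u v w) (NR k)"
  define T where "T = (\<lambda>x. mm x * PP s u v w x)"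
  have T0: "T x \<ge> 0" for x by (simp add: T_def mm_nonneg PP_nonneg)
  have ggs: "gg s u v w summable_on NR k" by (rule gg_P(1)[OF hu hv hw NR_Z3])
  have G0: "G \<ge> 0" unfolding G_def by (rule infsum_nonneg) (simp add: gg_nonneg)
  have fin: "sum T H \<le> 320 * sqrt G" if H: "finite H" "H \<subseteq> NR k" for H
  proof -
    have cs: "(sum T H)^2 \<le> (\<Sum>x\<in>H. (mm x)^2) * (\<Sum>x\<in>H. (PP s u v w x)^2)"
      unfolding T_def by (rule Cauchy_Schwarz_ineq_sum)
    have e: "(\<Sum>x\<in>H. (PP s u v w x)^2) = sum (gg s u v w) H" by (simp add: PP_sq)
    have b: "sum (gg s u v w) H \<le> G"
      unfolding G_def by (rule finite_sum_le_infsum[OF ggs H]) (simp add: gg_nonneg)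
    have a: "(\<Sum>x\<in>H. (mm x)^2) \<le> 102400" by (rule M_bound[OF H])
    have "(\<Sum>x\<in>H. (mm x)^2) * sum (gg s u v w) H \<le> 102400 * G"
      by (rule mult_mono[OF a b]) (auto intro: sum_nonneg gg_nonneg)
    then have "(sum T H)^2 \<le> 102400 * G" using cs e by simp
    then have "sum T H \<le> sqrt (102400 * G)" by (rule real_le_rsqrt)
    also have "sqrt (102400 * G) = 320 * sqrt G"
      by (simp add: real_sqrt_mult real_sqrt_unique)
    finally show ?thesis .
  qed
  have Ts: "T summable_on NR k" by (rule fa_sum(1)) (use fin T0 in auto)
  have Ti: "infsum T (NR k) \<le> 320 * sqrt G" by (rule fa_sum(2)) (use fin T0 in auto)
  define c where "c = 3 powr s / \<bar>real_of_int k\<bar> powr (s+2)"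
  have kp: "\<bar>real_of_int k\<bar> powr (s+2) > 0" using k0 by simp
  have pw: "cmod (B3_term t u v w x) \<le> c * T x" if "x \<in> NR k" for x
  proof -
    have "\<bar>real_of_int k\<bar> powr (s+2) * cmod (B3_term t u v w x) \<le> 3 powr s * T x"
      unfolding T_def by (rule pointwise[OF s0 that])
    then show ?thesis using kp unfolding c_def by (simp add: field_simps)
  qed
  have ns: "(\<lambda>x. cmod (B3_term t u v w x)) summable_on NR k"
    by (rule summable_on_comparison_test[OF summable_on_cmult_right[OF Ts]]) (use pw in auto)
  show "(B3_term t u v w) summable_on NR k" by (rule abs_summable_summable[OF ns])
  have "cmod (B3 t u v w k) \<le> infsum (\<lambda>x. cmod (B3_term t u v w x)) (NR k)"
    unfolding B3_def by (rule norm_infsum_bound[OF ns])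
  also have "\<dots> \<le> infsum (\<lambda>x. c * T x) (NR k)"
    by (rule infsum_mono[OF ns summable_on_cmult_right[OF Ts]]) (use pw in auto)
  also have "\<dots> = c * infsum T (NR k)" by (rule infsum_cmult_right') 
  finally have "cmod (B3 t u v w k) \<le> c * infsum T (NR k)" .
  then have "\<bar>real_of_int k\<bar> powr (s+2) * cmod (B3 t u v w k) \<le> 3 powr s * infsum T (NR k)"
    using kp unfolding c_def by (simp add: field_simps)
  also have "\<dots> \<le> 3 powr s * (320 * sqrt G)" by (rule mult_left_mono[OF Ti]) simp
  finally show "\<bar>real_of_int k\<bar> powr (s+2) * cmod (B3 t u v w k) \<le> 3 powr s * 320 * sqrt (infsum (gg s u v w) (NR k))"
    by (simp add: G_def mult.assoc)
qed

theorem lemma7p7: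
  fixes s :: real
  assumes "s \<ge> 0"
  shows "\<exists>c3::real. \<forall>t::real. \<forall>u v w.
           in_Hdot s u \<and> in_Hdot s v \<and> in_Hdot s w \<longrightarrow>
             (\<forall>k\<in>Z0. (B3_term t u v w) summable_on (NR k)) \<and>
             in_Hdot (s+2) (B3 t u v w) \<and>
             Hdot_norm (s+2) (B3 t u v w) \<le> c3 * Hdot_norm s u * Hdot_norm s v * Hdot_norm s w"
proof -
  define C where "C = 3 powr s * 320"
  have C0: "C \<ge> 0" by (simp add: C_def)
  show ?thesis
  proof (rule exI[of _ C], intro allI impI)
    fix t u v w assume h: "in_Hdot s u \<and> in_Hdot s v \<and> in_Hdot s w"
    then have hu: "in_Hdot s u" and hv: "in_Hdot s v" and hw: "in_Hdot s w" by auto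
    define Nu where "Nu = infsum (fs s u) Z0"
    define Nv where "Nv = infsum (fs s v) Z0"
    define Nw where "Nw = infsum (fs s w) Z0"
    have N0: "Nu \<ge> 0" "Nv \<ge> 0" "Nw \<ge> 0" unfolding Nu_def Nv_def Nw_def
      by (auto intro!: infsum_nonneg simp: fs_nonneg)
    have Hn: "Hdot_norm s u = sqrt Nu" "Hdot_norm s v = sqrt Nv" "Hdot_norm s w = sqrt Nw"
      by (simp_all add: Hdot_norm_def Nu_def Nv_def Nw_def fs_def[abs_def])
    define f where "f = (\<lambda>k. abs (real_of_int k) powr (2 * (s+2)) * (cmod (B3 t u v w k))^2)"
    have f0: "f k \<ge> 0" for k by (simp add: f_def)
    have fk: "f k \<le> C^2 * infsum (gg s u v w) (NR k)" if k: "k \<in> Z0" for k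
    proof -
      have k0: "k \<noteq> 0" using k by (simp add: Z0_def)
      define X where "X = \<bar>real_of_int k\<bar> powr (s+2) * cmod (B3 t u v w k)"
      have X0: "X \<ge> 0" by (simp add: X_def)
      have "X \<le> C * sqrt (infsum (gg s u v w) (NR k))"
        unfolding X_def C_def by (rule per_k(2)[OF assms hu hv hw k0])
      then have "X^2 \<le> (C * sqrt (infsum (gg s u v w) (NR k)))^2"
        by (rule power_mono[OF _ X0])
      also have "\<dots> = C^2 * infsum (gg s u v w) (NR k)"
        by (simp add: power_mult_distrib infsum_nonneg gg_nonneg)
      also have "X^2 = f k"
        by (simp add: X_def f_def power_mult_distrib powr_sq)
      finally show ?thesis .
    qed
    have fF: "sum f F \<le> C^2 * (Nu * Nv * Nw)" if F: "finite F" "F \<subseteq> Z0" for F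
    proof -
      have "sum f F \<le> (\<Sum>k\<in>F. C^2 * infsum (gg s u v w) (NR k))"
        by (rule sum_mono) (use fk F in auto)
      also have "\<dots> = C^2 * (\<Sum>k\<in>F. infsum (gg s u v w) (NR k))" by (simp add: sum_distrib_left)
      also have "(\<Sum>k\<in>F. infsum (gg s u v w) (NR k)) = infsum (gg s u v w) (\<Union>k\<in>F. NR k)"
        by (rule union_sum[OF hu hv hw F(1)])
      also have "infsum (gg s u v w) (\<Union>k\<in>F. NR k) \<le> Nu * Nv * Nw"
        unfolding Nu_def Nv_def Nw_def
        by (rule gg_P(2)[OF hu hv hw]) (use NR_Z3 in \<open>simp add: UN_subset_iff\<close>)
      finally show ?thesis by (simp add: mult_left_mono)
    qed
    have fs: "f summable_on Z0" by (rule fa_sum(1)) (use f0 fF in auto)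
    have fi: "infsum f Z0 \<le> C^2 * (Nu * Nv * Nw)" by (rule fa_sum(2)) (use f0 fF in auto)
    show "(\<forall>k\<in>Z0. (B3_term t u v w) summable_on (NR k)) \<and>
             in_Hdot (s+2) (B3 t u v w) \<and>
             Hdot_norm (s+2) (B3 t u v w) \<le> C * Hdot_norm s u * Hdot_norm s v * Hdot_norm s w"
    proof (intro conjI ballI)
      fix k assume "k \<in> Z0"
      then show "(B3_term t u v w) summable_on (NR k)" by (intro per_k(1)[OF assms hu hv hw]) (simp add: Z0_def)
    next
      show "in_Hdot (s+2) (B3 t u v w)" using fs by (simp add: in_Hdot_def f_def)
    next
      have "Hdot_norm (s+2) (B3 t u v w) = sqrt (infsum f Z0)" by (simp add: Hdot_norm_def f_def)
      also have "\<dots> \<le> sqrt (C^2 * (Nu * Nv * Nw))" by (rule real_sqrt_le_mono[OF fi])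
      also have "\<dots> = C * sqrt Nu * sqrt Nv * sqrt Nw" using C0 by (simp add: real_sqrt_mult)
      finally show "Hdot_norm (s+2) (B3 t u v w) \<le> C * Hdot_norm s u * Hdot_norm s v * Hdot_norm s w"
        by (simp add: Hn)
    qed
  qed
qed

end
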